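(* Let $U$ be a matchgate unitary on $n$ qubits, let $B=i^bC_{\vec\alpha}$ be a Hermitian Pauli observable (with $\vec\alpha$ a Majorana configuration and $b$ an integer), and let $S\subseteq\{1,\dots,n\}$. For each $s\in S$ let $\mathbf n_s\in\mathbb R^3$ be a unit vector and define the $3\times 3$ matrix $\mathbf M_s$ by the requirement that $\frac{1}{2^{n+2}}\|[\mathbf n\cdot\boldsymbol\sigma_s,U^\dagger BU]\|^2=\mathbf n^*\cdot\mathbf M_s\cdot\mathbf n$ for all $\mathbf n$. For each qubit $j\in\{1,\dots,n\}$ choose a unit Bloch vector $\mathbf n^\perp_j$, with $\mathbf n^\perp_j\perp\mathbf n_j$ for $j\in S$, and consider the product basis $\{\otimes_{j=1}^n|(-1)^{\ell_j}\mathbf n_j^\perp\rangle\}_{\boldsymbol\ell\in\{0,1\}^n}$, where $|\mathbf m\rangle$ denotes the single-qubit pure state with Bloch vector $\mathbf m$. Then $$\overline{\big|\langle U^\dagger BU\rangle-\langle(\otimes_{s\in S}\mathcal E_s)[U^\dagger BU]\rangle\big|}\le\sum_{s\in S}\sqrt{\mathbf n_s^*\cdot\mathbf M_s\cdot\mathbf n_s},$$ where $\overline{(\cdot)}$ denotes the uniform average over the $2^n$ states of this product basis (expectation values taken in each basis state), and $\mathcal E_s$ is the completely depolarizing channel on qubit $s$, $\mathcal E_s(O)=\frac14\big(O+\sum_{k\in\{x,y,z\}}\sigma^k_sO\sigma^k_s\big)$.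
   Context: On $n$ qubits, $\boldsymbol\sigma_s=(\sigma^x_s,\sigma^y_s,\sigma^z_s)=(X_s,Y_s,Z_s)$ are the Pauli operators on qubit $s$ and $\mathbf n\cdot\boldsymbol\sigma_s=\sum_k n_k\sigma^k_s$. Majorana operators: $c_{2k-1}=Z_1\cdots Z_{k-1}X_k$, $c_{2k}=Z_1\cdots Z_{k-1}Y_k$. A Majorana configuration is an ordered tuple $\vec\alpha=(\alpha_1<\dots<\alpha_k)$ with entries in $\{1,\dots,2n\}$, and $C_{\vec\alpha}=c_{\alpha_1}\cdots c_{\alpha_k}$. A matchgate unitary is a unitary $U$ on $n$ qubits for which there is $\mathbf u\in\mathbf{SO}(2n)$ with $U^\dagger c_\mu U=\sum_\nu u_{\mu\nu}c_\nu$ for all $\mu$. $\|O\|^2=\mathrm{tr}(O^\dagger O)$ is the Frobenius norm. *)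

theory Defs
  imports Complex_Main "Jordan_Normal_Form.Matrix" "Jordan_Normal_Form.Determinant"
    "Jordan_Normal_Form.Schur_Decomposition"
begin

text \<open>n-qubit operators are complex 2^n x 2^n matrices. Basis index i < 2^n;
  qubit j (1 \<le> j \<le> n) corresponds to binary digit (j-1) of i.\<close>

definition qbit :: "nat \<Rightarrow> nat \<Rightarrow> nat" where
  "qbit i j = (i div 2 ^ j) mod 2"

text \<open>Tensor product of single-qubit 2x2 matrices f 0, ..., f (n-1) (f j acts on qubit j+1).\<close>
definition tensor :: "nat \<Rightarrow> (nat \<Rightarrow> complex mat) \<Rightarrow> complex mat" where
  "tensor n f = mat (2 ^ n) (2 ^ n) (\<lambda>(i, k). \<Prod>j<n. f j $$ (qbit i j, qbit k j))"

definition embed :: "nat \<Rightarrow> nat \<Rightarrow> complex mat \<Rightarrow> complex mat" where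
  "embed n s A = tensor n (\<lambda>j. if j = s - 1 then A else 1\<^sub>m 2)"

definition pauliX :: "complex mat" where
  "pauliX = mat_of_rows_list 2 [[0, 1], [1, 0]]"
definition pauliY :: "complex mat" where
  "pauliY = mat_of_rows_list 2 [[0, - \<i>], [\<i>, 0]]"
definition pauliZ :: "complex mat" where
  "pauliZ = mat_of_rows_list 2 [[1, 0], [0, -1]]"

definition pauli :: "nat \<Rightarrow> complex mat" where
  "pauli k = (if k = 0 then pauliX else if k = 1 then pauliY else pauliZ)"

definition sigma :: "nat \<Rightarrow> nat \<Rightarrow> nat \<Rightarrow> complex mat" where
  "sigma n s k = embed n s (pauli k)"

definition ndot_sigma :: "nat \<Rightarrow> nat \<Rightarrow> (nat \<Rightarrow> real) \<Rightarrow> complex mat" where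
  "ndot_sigma n s v = (complex_of_real (v 0) \<cdot>\<^sub>m sigma n s 0) + (complex_of_real (v 1) \<cdot>\<^sub>m sigma n s 1)
      + (complex_of_real (v 2) \<cdot>\<^sub>m sigma n s 2)"

definition mat_prod_list :: "nat \<Rightarrow> complex mat list \<Rightarrow> complex mat" where
  "mat_prod_list d As = foldr (*) As (1\<^sub>m d)"

text \<open>Majorana operators c_{2k-1} = Z_1...Z_{k-1} X_k, c_{2k} = Z_1...Z_{k-1} Y_k (mu from 1 to 2n).\<close>
definition majorana :: "nat \<Rightarrow> nat \<Rightarrow> complex mat" where
  "majorana n \<mu> = (let k = (\<mu> + 1) div 2 in
     mat_prod_list (2 ^ n) (map (\<lambda>j. sigma n j 2) [1..<k] @
        [if odd \<mu> then sigma n k 0 else sigma n k 1]))"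

definition majorana_config :: "nat \<Rightarrow> nat list \<Rightarrow> bool" where
  "majorana_config n \<alpha> \<longleftrightarrow> sorted_wrt (<) \<alpha> \<and> set \<alpha> \<subseteq> {1..2 * n}"

definition majorana_prod :: "nat \<Rightarrow> nat list \<Rightarrow> complex mat" where
  "majorana_prod n \<alpha> = mat_prod_list (2 ^ n) (map (majorana n) \<alpha>)"

definition unitary_mat :: "nat \<Rightarrow> complex mat \<Rightarrow> bool" where
  "unitary_mat d U \<longleftrightarrow> U \<in> carrier_mat d d \<and> mat_adjoint U * U = 1\<^sub>m d \<and> U * mat_adjoint U = 1\<^sub>m d"

definition SO_mat :: "nat \<Rightarrow> real mat \<Rightarrow> bool" where
  "SO_mat d u \<longleftrightarrow> u \<in> carrier_mat d d \<and> u * transpose_mat u = 1\<^sub>m d \<and> det u = 1"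

text \<open>Matchgate unitary: U^dagger c_mu U = sum_nu u_{mu nu} c_nu for some u in SO(2n)
  (indices mu, nu in 1..2n correspond to matrix indices mu-1, nu-1).\<close>
definition matchgate :: "nat \<Rightarrow> complex mat \<Rightarrow> bool" where
  "matchgate n U \<longleftrightarrow> unitary_mat (2 ^ n) U \<and>
     (\<exists>u. SO_mat (2 * n) u \<and>
        (\<forall>\<mu>\<in>{1..2 * n}. mat_adjoint U * majorana n \<mu> * U =
            foldr (+) (map (\<lambda>\<nu>. complex_of_real (u $$ (\<mu> - 1, \<nu> - 1)) \<cdot>\<^sub>m majorana n \<nu>) [1..<2 * n + 1]) (0\<^sub>m (2 ^ n) (2 ^ n))))"

definition mtrace :: "complex mat \<Rightarrow> complex" where
  "mtrace A = (\<Sum>i<dim_row A. A $$ (i, i))"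

definition frob_sq :: "complex mat \<Rightarrow> real" where
  "frob_sq A = Re (mtrace (mat_adjoint A * A))"

definition commutator :: "complex mat \<Rightarrow> complex mat \<Rightarrow> complex mat" where
  "commutator A B = A * B - B * A"

definition depol :: "nat \<Rightarrow> nat \<Rightarrow> complex mat \<Rightarrow> complex mat" where
  "depol n s A = (1 / 4 :: complex) \<cdot>\<^sub>m (A + sigma n s 0 * A * sigma n s 0
       + sigma n s 1 * A * sigma n s 1 + sigma n s 2 * A * sigma n s 2)"

definition depol_set :: "nat \<Rightarrow> nat set \<Rightarrow> complex mat \<Rightarrow> complex mat" where
  "depol_set n S A = foldr (depol n) (sorted_list_of_set S) A"

text \<open>Density matrix |m><m| = (I + m.sigma)/2 of the single-qubit pure state with Bloch vector m.\<close>
definition bloch_dm :: "(nat \<Rightarrow> real) \<Rightarrow> complex mat" where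
  "bloch_dm m = (1 / 2 :: complex) \<cdot>\<^sub>m (1\<^sub>m 2 + complex_of_real (m 0) \<cdot>\<^sub>m pauliX
       + complex_of_real (m 1) \<cdot>\<^sub>m pauliY + complex_of_real (m 2) \<cdot>\<^sub>m pauliZ)"

text \<open>Basis state labelled by l < 2^n (l_j = binary digit j-1 of l) built from
  Bloch vectors (-1)^{l_j} nperp j; its density matrix.\<close>
definition basis_dm :: "nat \<Rightarrow> (nat \<Rightarrow> nat \<Rightarrow> real) \<Rightarrow> nat \<Rightarrow> complex mat" where
  "basis_dm n nperp l = tensor n (\<lambda>j. bloch_dm (\<lambda>k. (-1) ^ qbit l j * nperp (j + 1) k))"

definition expval :: "complex mat \<Rightarrow> complex mat \<Rightarrow> complex" where
  "expval \<rho> A = mtrace (\<rho> * A)"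

end

theory Submission
  imports Defs "HOL-Analysis.L2_Norm"
begin

lemma qbit_less: "qbit i j < 2" by (simp add: qbit_def)

lemma qbit_high: "(m::nat) < 2^n \<Longrightarrow> qbit m n = 0"
  by (simp add: qbit_def)

lemma qbit_shift: assumes "(m::nat) < 2^n" "j < n" shows "qbit (2^n + m) j = qbit m j"
proof -
  have "(2::nat)^n = 2^j * 2^(n-j)" using assms(2) by (simp add: power_add[symmetric])
  then have "(2^n + m) div 2^j = 2^(n-j) + m div 2^j" by simp
  moreover obtain k where "(2::nat)^(n-j) = 2*k" using assms(2)
    by (metis dvd_def dvd_power zero_less_diff)
  ultimately show ?thesis unfolding qbit_def by simp
qed

lemma qbit_top: assumes "(m::nat) < 2^n" shows "qbit (2^n + m) n = 1"
  using assms by (simp add: qbit_def)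

lemma sum_prod_qbit:
  fixes a :: "nat \<Rightarrow> nat \<Rightarrow> 'a::comm_semiring_1"
  shows "(\<Sum>m<2^n. \<Prod>j<n. a j (qbit m j)) = (\<Prod>j<n. a j 0 + a j 1)"
proof (induction n)
  case 0 then show ?case by simp
next
  case (Suc n)
  have split: "(\<Sum>m<2^Suc n. g m) = (\<Sum>m<2^n. g m) + (\<Sum>m<2^n. g (2^n + m))" for g :: "nat \<Rightarrow> 'a"
  proof -
    have "{..<2^Suc n} = {..<(2::nat)^n} \<union> {2^n..<2^n + 2^n}" by auto
    then have "(\<Sum>m<2^Suc n. g m) = (\<Sum>m<2^n. g m) + (\<Sum>m\<in>{2^n..<2^n+2^n}. g m)"
      by (simp add: sum.union_disjoint ivl_disj_int)
    also have "(\<Sum>m\<in>{2^n..<2^n+2^n}. g m) = (\<Sum>m<2^n. g (2^n + m))"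
      using sum.shift_bounds_nat_ivl[of g 0 "2^n" "2^n"] by (simp add: lessThan_atLeast0 add.commute)
    finally show ?thesis .
  qed
  have A: "(\<Prod>j<Suc n. a j (qbit m j)) = (\<Prod>j<n. a j (qbit m j)) * a n 0" if "m < 2^n" for m
    using that by (simp add: qbit_high)
  have B: "(\<Prod>j<Suc n. a j (qbit (2^n + m) j)) = (\<Prod>j<n. a j (qbit m j)) * a n 1" if "m < 2^n" for m
    using that by (simp add: qbit_shift qbit_top)
  have "(\<Sum>m<2^Suc n. \<Prod>j<Suc n. a j (qbit m j))
     = (\<Sum>m<2^n. (\<Prod>j<n. a j (qbit m j)) * a n 0) + (\<Sum>m<2^n. (\<Prod>j<n. a j (qbit m j)) * a n 1)"
    unfolding split[of "\<lambda>m. \<Prod>j<Suc n. a j (qbit m j)"]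
    by (intro arg_cong2[where f="(+)"] sum.cong) (auto simp del: prod.lessThan_Suc simp: A B)
  also have "\<dots> = (\<Prod>j<Suc n. a j 0 + a j 1)"
    by (simp add: sum_distrib_right[symmetric] Suc distrib_left)
  finally show ?case .
qed

lemma tensor_carrier[simp]: "tensor n f \<in> carrier_mat (2^n) (2^n)"
  by (simp add: tensor_def)
lemma tensor_dims[simp]: "dim_row (tensor n f) = 2^n" "dim_col (tensor n f) = 2^n"
  by (simp_all add: tensor_def)
lemma tensor_index: "i < 2^n \<Longrightarrow> k < 2^n \<Longrightarrow> tensor n f $$ (i,k) = (\<Prod>j<n. f j $$ (qbit i j, qbit k j))"
  by (simp add: tensor_def)

lemma mult2_index: assumes "A \<in> carrier_mat 2 2" "B \<in> carrier_mat 2 2" "x < 2" "y < 2"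
  shows "(A * B) $$ (x,y) = A $$ (x,0) * B $$ (0,y) + A $$ (x,1) * B $$ (1,y)"
  using assms by (simp add: scalar_prod_def eval_nat_numeral)

lemma tensor_mult:
  assumes "\<And>j. j < n \<Longrightarrow> f j \<in> carrier_mat 2 2" "\<And>j. j < n \<Longrightarrow> g j \<in> carrier_mat 2 2"
  shows "tensor n f * tensor n g = tensor n (\<lambda>j. f j * g j)"
proof (rule eq_matI)
  fix i k assume i: "i < dim_row (tensor n (\<lambda>j. f j * g j))" and k: "k < dim_col (tensor n (\<lambda>j. f j * g j))"
  then have i': "i < 2^n" and k': "k < 2^n" by auto
  have "(tensor n f * tensor n g) $$ (i,k) = (\<Sum>m<2^n. tensor n f $$ (i,m) * tensor n g $$ (m,k))"
    using i' k' by (simp add: scalar_prod_def lessThan_atLeast0)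
  also have "\<dots> = (\<Sum>m<2^n. \<Prod>j<n. (\<lambda>j b. f j $$ (qbit i j, b) * g j $$ (b, qbit k j)) j (qbit m j))"
    using i' k' by (intro sum.cong) (auto simp: tensor_index prod.distrib)
  also have "\<dots> = (\<Prod>j<n. f j $$ (qbit i j, 0) * g j $$ (0, qbit k j) + f j $$ (qbit i j, 1) * g j $$ (1, qbit k j))"
    by (rule sum_prod_qbit)
  also have "\<dots> = tensor n (\<lambda>j. f j * g j) $$ (i,k)"
    using i' k' assms by (auto simp: tensor_index mult2_index qbit_less intro!: prod.cong)
  finally have "(tensor n f * tensor n g) $$ (i,k) = tensor n (\<lambda>j. f j * g j) $$ (i,k)" .
  then show "(tensor n f * tensor n g) $$ (i,k) = tensor n (\<lambda>j. f j * g j) $$ (i,k)" by simp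
qed auto

lemma bit_qbit: "bit i j = (qbit i j = 1)"
  by (simp add: qbit_def bit_iff_odd odd_iff_mod_2_eq_one)

lemma qbit_eq_imp_eq: assumes "i < 2^n" "k < 2^n" "\<forall>j<n. qbit i j = qbit k j" shows "i = k"
proof -
  have "bit i j = bit k j" for j
  proof (cases "j < n")
    case True then show ?thesis using assms(3) by (simp add: bit_qbit)
  next
    case False
    then have "(2::nat)^n \<le> 2^j" by simp
    then have "i < 2^j" "k < 2^j" using assms(1,2) by linarith+
    then show ?thesis by (simp add: bit_iff_odd)
  qed
  then show ?thesis by (simp add: bit_eq_iff)
qed

lemma tensor_one: "tensor n (\<lambda>j. 1\<^sub>m 2) = 1\<^sub>m (2^n)"
proof (rule eq_matI)
  fix i k assume "i < dim_row (1\<^sub>m (2^n) :: complex mat)" "k < dim_col (1\<^sub>m (2^n) :: complex mat)"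
  then have i: "i < 2^n" and k: "k < 2^n" by auto
  show "tensor n (\<lambda>j. 1\<^sub>m 2) $$ (i, k) = (1\<^sub>m (2^n) :: complex mat) $$ (i, k)"
  proof (cases "i = k")
    case True then show ?thesis using i k by (simp add: tensor_index qbit_less)
  next
    case False
    then obtain j where j: "j < n" "qbit i j \<noteq> qbit k j" using qbit_eq_imp_eq[OF i k] by blast
    then have "(\<Prod>j<n. (1\<^sub>m 2 :: complex mat) $$ (qbit i j, qbit k j)) = 0"
      by (intro prod_zero bexI[of _ j]) (auto simp: qbit_less)
    then show ?thesis using i k False by (simp add: tensor_index)
  qed
qed auto

lemma adj_dims[simp]: "dim_row (mat_adjoint A) = dim_col A" "dim_col (mat_adjoint A) = dim_row A"
  by (simp_all add: mat_adjoint_def)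

lemma adj_index[simp]: "i < dim_col A \<Longrightarrow> k < dim_row A \<Longrightarrow> mat_adjoint A $$ (i,k) = cnj (A $$ (k,i))"
  by (simp add: mat_adjoint_def mat_of_rows_index)


lemma adj_carrier: "A \<in> carrier_mat r c \<Longrightarrow> mat_adjoint A \<in> carrier_mat c r"
  by (rule carrier_matI) (auto dest: carrier_matD)

lemma adj_adj[simp]: "mat_adjoint (mat_adjoint A) = (A :: complex mat)"
proof (rule eq_matI)
  fix i j assume "i < dim_row A" "j < dim_col A"
  then show "mat_adjoint (mat_adjoint A) $$ (i, j) = A $$ (i, j)"
    using adj_index[of i "mat_adjoint A" j] adj_index[of j A i] by simp
qed simp_all

lemma adj_mult: fixes A B :: "complex mat" assumes "A \<in> carrier_mat r m" "B \<in> carrier_mat m c"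
  shows "mat_adjoint (A * B) = mat_adjoint B * mat_adjoint A"
proof (rule eq_matI)
  fix i k assume "i < dim_row (mat_adjoint B * mat_adjoint A)" "k < dim_col (mat_adjoint B * mat_adjoint A)"
  then show "mat_adjoint (A * B) $$ (i, k) = (mat_adjoint B * mat_adjoint A) $$ (i, k)"
  proof -
    have ik: "i < c" "k < r" using assms \<open>i < _\<close> \<open>k < _\<close> by auto
    have "mat_adjoint (A * B) $$ (i, k) = cnj ((A*B) $$ (k,i))"
      using ik assms by (intro adj_index) auto
    also have "\<dots> = (\<Sum>x<m. mat_adjoint B $$ (i,x) * mat_adjoint A $$ (x,k))"
      using ik assms by (simp add: scalar_prod_def mult.commute lessThan_atLeast0)
    also have "\<dots> = (mat_adjoint B * mat_adjoint A) $$ (i, k)"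
      using ik assms by (simp add: scalar_prod_def lessThan_atLeast0)
    finally show ?thesis .
  qed
qed (use assms in simp_all)

lemma adj_tensor: assumes "\<And>j. j < n \<Longrightarrow> f j \<in> carrier_mat 2 2"
  shows "mat_adjoint (tensor n f) = tensor n (\<lambda>j. mat_adjoint (f j))"
proof (rule eq_matI)
  fix i k assume "i < dim_row (tensor n (\<lambda>j. mat_adjoint (f j)))" "k < dim_col (tensor n (\<lambda>j. mat_adjoint (f j)))"
  then have i: "i < 2^n" and k: "k < 2^n" by auto
  show "mat_adjoint (tensor n f) $$ (i, k) = tensor n (\<lambda>j. mat_adjoint (f j)) $$ (i, k)"
  proof -
    have "mat_adjoint (tensor n f) $$ (i, k) = (\<Prod>j<n. cnj (f j $$ (qbit k j, qbit i j)))"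
      using i k by (simp add: tensor_index)
    also have "\<dots> = (\<Prod>j<n. mat_adjoint (f j) $$ (qbit i j, qbit k j))"
    proof (rule prod.cong)
      fix j assume "j \<in> {..<n}"
      then have "f j \<in> carrier_mat 2 2" using assms by simp
      then show "cnj (f j $$ (qbit k j, qbit i j)) = mat_adjoint (f j) $$ (qbit i j, qbit k j)"
        by (simp add: qbit_less)
    qed simp
    finally show ?thesis using i k by (simp add: tensor_index)
  qed
qed simp_all

lemma prod_upd: fixes n :: nat assumes "p < n"
  shows "(\<Prod>j<n. (f(p := X)) j $$ (a j, b j)) = X $$ (a p, b p) * (\<Prod>j\<in>{..<n}-{p}. f j $$ (a j, b j))"
proof -
  have "(\<Prod>j<n. (f(p := X)) j $$ (a j, b j)) = (f(p := X)) p $$ (a p, b p) * (\<Prod>j\<in>{..<n}-{p}. (f(p := X)) j $$ (a j, b j))"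
    using assms prod.remove[of "{..<n}" p "\<lambda>j. (f(p := X)) j $$ (a j, b j)"] by simp
  also have "(\<Prod>j\<in>{..<n}-{p}. (f(p := X)) j $$ (a j, b j)) = (\<Prod>j\<in>{..<n}-{p}. f j $$ (a j, b j))"
    by (intro prod.cong) auto
  finally show ?thesis by simp
qed

lemma tensor_upd_index: "p < n \<Longrightarrow> i < 2^n \<Longrightarrow> k < 2^n \<Longrightarrow>
  tensor n (f(p := X)) $$ (i,k) = X $$ (qbit i p, qbit k p) * (\<Prod>j\<in>{..<n}-{p}. f j $$ (qbit i j, qbit k j))"
  by (simp only: tensor_index prod_upd)

lemma tensor_slot_add: assumes "p < n" "A \<in> carrier_mat 2 2" "B \<in> carrier_mat 2 2"
  shows "tensor n (f(p := A + B)) = tensor n (f(p := A)) + tensor n (f(p := B))"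
proof (rule eq_matI)
  fix i k assume "i < dim_row (tensor n (f(p := A)) + tensor n (f(p := B)))" "k < dim_col (tensor n (f(p := A)) + tensor n (f(p := B)))"
  then have i: "i < 2^n" and k: "k < 2^n" by auto
  show "tensor n (f(p := A + B)) $$ (i, k) = (tensor n (f(p := A)) + tensor n (f(p := B))) $$ (i, k)"
    using i k assms by (simp add: tensor_upd_index qbit_less distrib_right)
qed auto

lemma tensor_slot_smult: assumes "p < n" "A \<in> carrier_mat 2 2"
  shows "tensor n (f(p := c \<cdot>\<^sub>m A)) = c \<cdot>\<^sub>m tensor n (f(p := A))"
proof (rule eq_matI)
  fix i k assume "i < dim_row (c \<cdot>\<^sub>m tensor n (f(p := A)))" "k < dim_col (c \<cdot>\<^sub>m tensor n (f(p := A)))"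
  then have i: "i < 2^n" and k: "k < 2^n" by auto
  show "tensor n (f(p := c \<cdot>\<^sub>m A)) $$ (i, k) = (c \<cdot>\<^sub>m tensor n (f(p := A))) $$ (i, k)"
    using i k assms by (simp add: tensor_upd_index qbit_less)
qed auto

lemma tensor_cong: "(\<And>j. j < n \<Longrightarrow> f j = g j) \<Longrightarrow> tensor n f = tensor n g"
  unfolding tensor_def by (intro cong_mat refl) (auto intro!: prod.cong)

definition one2 :: "nat \<Rightarrow> complex mat" where "one2 = (\<lambda>j. 1\<^sub>m 2)"

lemma embed_upd: "embed n s A = tensor n (one2(s - 1 := A))"
  unfolding embed_def one2_def by (rule arg_cong[where f="tensor n"]) auto

lemma tensor_conj:
  assumes p: "p < n" and AB: "A \<in> carrier_mat 2 2" "B \<in> carrier_mat 2 2"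
    and F: "\<And>j. j < n \<Longrightarrow> F j \<in> carrier_mat 2 2"
  shows "tensor n (one2(p := A)) * tensor n F * tensor n (one2(p := B)) = tensor n (F(p := A * F p * B))"
proof -
  have c1: "\<And>j. j < n \<Longrightarrow> (one2(p := A)) j \<in> carrier_mat 2 2" using AB by (auto simp: one2_def)
  have c2: "\<And>j. j < n \<Longrightarrow> (one2(p := B)) j \<in> carrier_mat 2 2" using AB by (auto simp: one2_def)
  have c3: "\<And>j. j < n \<Longrightarrow> (one2(p := A)) j * F j \<in> carrier_mat 2 2" using c1 F by (meson mult_carrier_mat)
  have "tensor n (one2(p := A)) * tensor n F * tensor n (one2(p := B))
     = tensor n (\<lambda>j. (one2(p := A)) j * F j * (one2(p := B)) j)"
    using c1 c2 c3 F by (simp add: tensor_mult)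
  also have "\<dots> = tensor n (F(p := A * F p * B))"
  proof (intro tensor_cong)
    fix j assume "j < n"
    then have "F j \<in> carrier_mat 2 2" by (rule F)
    then show "(one2(p := A)) j * F j * (one2(p := B)) j = (F(p := A * F p * B)) j"
      by (auto simp: one2_def)
  qed
  finally show ?thesis .
qed

lemma less2: "(x::nat) < 2 \<longleftrightarrow> x = 0 \<or> x = 1" by auto

lemma pX_c[simp]: "pauliX \<in> carrier_mat 2 2" by (simp add: pauliX_def mat_of_rows_list_def numeral_2_eq_2)
lemma pY_c[simp]: "pauliY \<in> carrier_mat 2 2" by (simp add: pauliY_def mat_of_rows_list_def numeral_2_eq_2)
lemma pZ_c[simp]: "pauliZ \<in> carrier_mat 2 2" by (simp add: pauliZ_def mat_of_rows_list_def numeral_2_eq_2)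
lemma pauli_c[simp]: "pauli k \<in> carrier_mat 2 2" by (simp add: pauli_def)
lemma pX_d[simp]: "dim_row pauliX = 2" "dim_col pauliX = 2" by (simp_all add: pauliX_def mat_of_rows_list_def)
lemma pY_d[simp]: "dim_row pauliY = 2" "dim_col pauliY = 2" by (simp_all add: pauliY_def mat_of_rows_list_def)
lemma pZ_d[simp]: "dim_row pauliZ = 2" "dim_col pauliZ = 2" by (simp_all add: pauliZ_def mat_of_rows_list_def)

lemma pX_i: "pauliX $$ (0,0) = 0" "pauliX $$ (0,Suc 0) = 1" "pauliX $$ (Suc 0,0) = 1" "pauliX $$ (Suc 0,Suc 0) = 0"
  by (simp_all add: pauliX_def mat_of_rows_list_def)
lemma pY_i: "pauliY $$ (0,0) = 0" "pauliY $$ (0,Suc 0) = -\<i>" "pauliY $$ (Suc 0,0) = \<i>" "pauliY $$ (Suc 0,Suc 0) = 0"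
  by (simp_all add: pauliY_def mat_of_rows_list_def)
lemma pZ_i: "pauliZ $$ (0,0) = 1" "pauliZ $$ (0,Suc 0) = 0" "pauliZ $$ (Suc 0,0) = 0" "pauliZ $$ (Suc 0,Suc 0) = -1"
  by (simp_all add: pauliZ_def mat_of_rows_list_def)

lemmas p_i = pX_i pY_i pZ_i

lemma mat2_eqI: assumes "A \<in> carrier_mat 2 2" "B \<in> carrier_mat 2 2"
  "A $$ (0,0) = B $$ (0,0)" "A $$ (0,Suc 0) = B $$ (0,Suc 0)" "A $$ (Suc 0,0) = B $$ (Suc 0,0)" "A $$ (Suc 0,Suc 0) = B $$ (Suc 0,Suc 0)"
  shows "A = B"
  by (rule eq_matI) (use assms in \<open>auto simp: less2\<close>)

lemma mult2_i: assumes "A \<in> carrier_mat 2 2" "B \<in> carrier_mat 2 2"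
  shows "(A * B) $$ (0,0) = A $$ (0,0) * B $$ (0,0) + A $$ (0,Suc 0) * B $$ (Suc 0,0)"
    "(A * B) $$ (0,Suc 0) = A $$ (0,0) * B $$ (0,Suc 0) + A $$ (0,Suc 0) * B $$ (Suc 0,Suc 0)"
    "(A * B) $$ (Suc 0,0) = A $$ (Suc 0,0) * B $$ (0,0) + A $$ (Suc 0,Suc 0) * B $$ (Suc 0,0)"
    "(A * B) $$ (Suc 0,Suc 0) = A $$ (Suc 0,0) * B $$ (0,Suc 0) + A $$ (Suc 0,Suc 0) * B $$ (Suc 0,Suc 0)"
  using mult2_index[OF assms] by (auto simp: scalar_prod_def)

lemma mult2_c[simp]: "A \<in> carrier_mat 2 2 \<Longrightarrow> B \<in> carrier_mat 2 2 \<Longrightarrow> A * B \<in> carrier_mat 2 2"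
  by (rule mult_carrier_mat)

lemma pauli_sq: "pauli k * pauli k = 1\<^sub>m 2"
  by (rule mat2_eqI) (auto simp: pauli_def mult2_i p_i simp del: index_mult_mat(1))

lemma pauli_adj: "mat_adjoint (pauli k) = pauli k"
  by (rule mat2_eqI) (auto simp: pauli_def p_i adj_carrier)

definition nsig :: "(nat \<Rightarrow> real) \<Rightarrow> complex mat" where
  "nsig v = (complex_of_real (v 0) \<cdot>\<^sub>m pauliX + complex_of_real (v 1) \<cdot>\<^sub>m pauliY) + complex_of_real (v 2) \<cdot>\<^sub>m pauliZ"

lemma nsig_c[simp]: "nsig v \<in> carrier_mat 2 2" by (simp add: nsig_def)
lemma bloch_c[simp]: "bloch_dm m \<in> carrier_mat 2 2" by (simp add: bloch_dm_def)

lemma nsig_d[simp]: "dim_row (nsig v) = 2" "dim_col (nsig v) = 2" by (simp_all add: nsig_def)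
lemma bloch_d[simp]: "dim_row (bloch_dm m) = 2" "dim_col (bloch_dm m) = 2" by (simp_all add: bloch_dm_def)

lemma nsig_i: "nsig v $$ (0,0) = v 2" "nsig v $$ (0,Suc 0) = v 0 - \<i> * v 1"
  "nsig v $$ (Suc 0,0) = v 0 + \<i> * v 1" "nsig v $$ (Suc 0,Suc 0) = - v 2"
  by (simp_all add: nsig_def p_i)

lemma bloch_i: "bloch_dm m $$ (0,0) = (1 + m 2) / 2" "bloch_dm m $$ (0,Suc 0) = (m 0 - \<i> * m 1) / 2"
  "bloch_dm m $$ (Suc 0,0) = (m 0 + \<i> * m 1) / 2" "bloch_dm m $$ (Suc 0,Suc 0) = (1 - m 2) / 2"
  by (simp_all add: bloch_dm_def p_i)

lemma nsig_adj: "mat_adjoint (nsig v) = nsig v"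
  by (rule mat2_eqI) (auto simp: nsig_i adj_carrier)

lemma bloch_adj: "mat_adjoint (bloch_dm m) = bloch_dm m"
  by (rule mat2_eqI) (auto simp: bloch_i adj_carrier)

lemma nsig_sq: assumes "(v 0)\<^sup>2 + (v 1)\<^sup>2 + (v 2)\<^sup>2 = 1" shows "nsig v * nsig v = 1\<^sub>m 2"
proof -
  have a: "v 2 * v 2 + v 0 * v 0 + v (Suc 0) * v (Suc 0) = 1" using assms by (simp add: power2_eq_square)
  show ?thesis
    apply (intro mat2_eqI)
    apply (simp_all add: nsig_i mult2_i complex_eq_iff del: index_mult_mat(1))
    apply (simp_all add: field_simps)
    apply (use a in linarith)+
    done
qed

lemma bloch_sq: assumes "(m 0)\<^sup>2 + (m 1)\<^sup>2 + (m 2)\<^sup>2 = 1" shows "bloch_dm m * bloch_dm m = bloch_dm m"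
proof -
  have a: "m 2 * m 2 + m 0 * m 0 + m (Suc 0) * m (Suc 0) = 1" using assms by (simp add: power2_eq_square)
  show ?thesis
    using a by (intro mat2_eqI) (auto simp: bloch_i mult2_i complex_eq_iff simp del: index_mult_mat(1), auto simp: field_simps)
qed

lemma depol2: "(1/4::complex) \<cdot>\<^sub>m (((bloch_dm m + pauli 0 * bloch_dm m * pauli 0) + pauli 1 * bloch_dm m * pauli 1)
   + pauli 2 * bloch_dm m * pauli 2) = (1/2::complex) \<cdot>\<^sub>m 1\<^sub>m 2"
  by (rule mat2_eqI) (auto simp: bloch_i mult2_i p_i pauli_def complex_eq_iff algebra_simps simp del: index_mult_mat(1))

lemma NPN_i:
  fixes v m :: "nat \<Rightarrow> real" and sq dt :: complex
  defines "sq \<equiv> complex_of_real (v 0 * v 0 + v 1 * v 1 + v 2 * v 2)"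
  defines "dt \<equiv> complex_of_real (v 0 * m 0 + v 1 * m 1 + v 2 * m 2)"
  shows "(nsig v * bloch_dm m * nsig v) $$ (0,0) = (sq + 2 * dt * v 2 - sq * m 2) / 2"
    "(nsig v * bloch_dm m * nsig v) $$ (0,Suc 0) = (2 * dt * (v 0 - \<i> * v 1) - sq * (m 0 - \<i> * m 1)) / 2"
    "(nsig v * bloch_dm m * nsig v) $$ (Suc 0,0) = (2 * dt * (v 0 + \<i> * v 1) - sq * (m 0 + \<i> * m 1)) / 2"
    "(nsig v * bloch_dm m * nsig v) $$ (Suc 0,Suc 0) = (sq - 2 * dt * v 2 + sq * m 2) / 2"
  unfolding sq_def dt_def
     apply (simp_all add: bloch_i nsig_i mult2_i complex_eq_iff del: index_mult_mat(1))
     apply (simp_all add: field_simps)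
  done

lemma twirl2: assumes "(v 0)\<^sup>2 + (v 1)\<^sup>2 + (v 2)\<^sup>2 = 1" "m 0 * v 0 + m 1 * v 1 + m 2 * v 2 = 0"
  shows "(1/2::complex) \<cdot>\<^sub>m (bloch_dm m + nsig v * bloch_dm m * nsig v) = (1/2::complex) \<cdot>\<^sub>m 1\<^sub>m 2"
proof -
  have a: "v 0 * v 0 + v 1 * v 1 + v 2 * v 2 = 1" using assms(1) by (simp add: power2_eq_square)
  have b: "v 0 * m 0 + v 1 * m 1 + v 2 * m 2 = 0" using assms(2) by (simp add: mult.commute)
  show ?thesis
    apply (intro mat2_eqI)
    apply (simp_all add: NPN_i[of v m, unfolded a b] bloch_i del: index_mult_mat(1))
    apply (simp_all add: field_simps)
    done
qed

lemma one2_c0[simp]: "one2 j \<in> carrier_mat 2 2" by (simp add: one2_def)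

lemma one2_c[simp]: "A \<in> carrier_mat 2 2 \<Longrightarrow> (one2(p := A)) j \<in> carrier_mat 2 2"
  by (simp add: one2_def)

lemma tensor_one2: "tensor n one2 = 1\<^sub>m (2^n)"
  unfolding one2_def by (rule tensor_one)

lemma slot_mult: assumes "A \<in> carrier_mat 2 2" "B \<in> carrier_mat 2 2"
  shows "tensor n (one2(p := A)) * tensor n (one2(p := B)) = tensor n (one2(p := A * B))"
proof -
  have "tensor n (one2(p := A)) * tensor n (one2(p := B)) = tensor n (\<lambda>j. (one2(p := A)) j * (one2(p := B)) j)"
    using assms by (intro tensor_mult) auto
  also have "\<dots> = tensor n (one2(p := A * B))"
    by (intro tensor_cong) (auto simp: one2_def)
  finally show ?thesis .
qed

lemma slot_comm: assumes "A \<in> carrier_mat 2 2" "B \<in> carrier_mat 2 2" "p \<noteq> q"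
  shows "tensor n (one2(p := A)) * tensor n (one2(q := B)) = tensor n (one2(q := B)) * tensor n (one2(p := A))"
proof -
  have "tensor n (one2(p := A)) * tensor n (one2(q := B)) = tensor n (\<lambda>j. (one2(p := A)) j * (one2(q := B)) j)"
    using assms by (intro tensor_mult) auto
  also have "\<dots> = tensor n (\<lambda>j. (one2(q := B)) j * (one2(p := A)) j)"
    using assms by (intro tensor_cong) (auto simp: one2_def)
  also have "\<dots> = tensor n (one2(q := B)) * tensor n (one2(p := A))"
    using assms by (intro tensor_mult[symmetric]) auto
  finally show ?thesis .
qed

lemma slot_adj: assumes "A \<in> carrier_mat 2 2"
  shows "mat_adjoint (tensor n (one2(p := A))) = tensor n (one2(p := mat_adjoint A))"
proof -
  have "mat_adjoint (tensor n (one2(p := A))) = tensor n (\<lambda>j. mat_adjoint ((one2(p := A)) j))"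
    using assms by (intro adj_tensor) auto
  also have "\<dots> = tensor n (one2(p := mat_adjoint A))"
  proof (intro tensor_cong)
    fix j
    have "mat_adjoint (1\<^sub>m 2 :: complex mat) = 1\<^sub>m 2"
      by (rule eq_matI) auto
    then show "mat_adjoint ((one2(p := A)) j) = (one2(p := mat_adjoint A)) j"
      by (auto simp: one2_def)
  qed
  finally show ?thesis .
qed

lemma sigma_t: "sigma n s k = tensor n (one2(s - 1 := pauli k))"
  by (simp add: sigma_def embed_upd)

lemma ndot_t: assumes "s \<in> {1..n}" shows "ndot_sigma n s v = tensor n (one2(s - 1 := nsig v))"
proof -
  have p: "s - 1 < n" using assms by auto
  show ?thesis
    unfolding ndot_sigma_def nsig_def sigma_t pauli_def
    using p by (simp add: tensor_slot_add tensor_slot_smult)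
qed

definition fn :: "complex mat \<Rightarrow> real" where "fn A = sqrt (frob_sq A)"

lemma mtrace_mult: assumes "A \<in> carrier_mat r c" "B \<in> carrier_mat c r"
  shows "mtrace (A * B) = (\<Sum>i<r. \<Sum>k<c. A $$ (i,k) * B $$ (k,i))"
  using assms by (simp add: mtrace_def scalar_prod_def lessThan_atLeast0)

lemma tr_comm: assumes "A \<in> carrier_mat r c" "B \<in> carrier_mat c r"
  shows "mtrace (A * B) = mtrace (B * A)"
  using assms by (simp add: mtrace_mult[OF assms] mtrace_mult[OF assms(2,1)] sum.swap[of _ "{..<r}"] mult.commute)

lemma tr_add: assumes "A \<in> carrier_mat r r" "B \<in> carrier_mat r r"
  shows "mtrace (A + B) = mtrace A + mtrace B"
  using assms by (simp add: mtrace_def sum.distrib)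

lemma tr_minus: assumes "A \<in> carrier_mat r r" "B \<in> carrier_mat r r"
  shows "mtrace (A - B) = mtrace A - mtrace B"
  using assms by (simp add: mtrace_def sum_subtractf)

lemma tr_smult: "A \<in> carrier_mat r r \<Longrightarrow> mtrace (c \<cdot>\<^sub>m A) = c * mtrace A"
  by (simp add: mtrace_def sum_distrib_left)

lemma frob_sum: assumes "A \<in> carrier_mat r c"
  shows "frob_sq A = (\<Sum>i<r. \<Sum>k<c. (cmod (A $$ (i,k)))\<^sup>2)"
proof -
  have "mtrace (mat_adjoint A * A) = (\<Sum>k<c. \<Sum>i<r. cnj (A $$ (i,k)) * A $$ (i,k))"
    using assms adj_carrier[OF assms] by (simp add: mtrace_mult[of _ c r _])
  also have "\<dots> = (\<Sum>k<c. \<Sum>i<r. complex_of_real ((cmod (A $$ (i,k)))\<^sup>2))"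
    by (simp add: complex_norm_square[symmetric] mult.commute del: of_real_power)
  finally have "mtrace (mat_adjoint A * A) = complex_of_real (\<Sum>i<r. \<Sum>k<c. (cmod (A $$ (i,k)))\<^sup>2)"
    by (simp add: sum.swap[of _ "{..<c}"])
  then show ?thesis unfolding frob_sq_def by simp
qed

lemma frob_nonneg: "A \<in> carrier_mat r c \<Longrightarrow> 0 \<le> frob_sq A"
  by (simp add: frob_sum sum_nonneg)

lemma fn_L2: assumes "A \<in> carrier_mat r c"
  shows "fn A = L2_set (\<lambda>x. cmod (A $$ x)) ({..<r} \<times> {..<c})"
  unfolding fn_def L2_set_def frob_sum[OF assms] sum.cartesian_product
  by (simp add: case_prod_beta)

lemma fn_triangle: assumes "A \<in> carrier_mat r c" "B \<in> carrier_mat r c"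
  shows "fn (A + B) \<le> fn A + fn B"
proof -
  have "fn (A + B) = L2_set (\<lambda>x. cmod ((A + B) $$ x)) ({..<r} \<times> {..<c})"
    using assms by (simp add: fn_L2)
  also have "\<dots> \<le> L2_set (\<lambda>x. cmod (A $$ x) + cmod (B $$ x)) ({..<r} \<times> {..<c})"
    using assms by (intro L2_set_mono) (auto simp: norm_triangle_ineq)
  also have "\<dots> \<le> fn A + fn B"
    using assms by (simp add: fn_L2 L2_set_triangle_ineq)
  finally show ?thesis .
qed

lemma fn_smult: assumes "A \<in> carrier_mat r c"
  shows "fn (a \<cdot>\<^sub>m A) = cmod a * fn A"
proof -
  have "fn (a \<cdot>\<^sub>m A) = L2_set (\<lambda>x. cmod a * cmod (A $$ x)) ({..<r} \<times> {..<c})"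
    using assms by (subst fn_L2[of _ r c]) (auto simp: norm_mult intro!: L2_set_cong)
  also have "\<dots> = cmod a * fn A"
    using assms by (simp add: fn_L2 L2_set_right_distrib)
  finally show ?thesis .
qed

lemma tr_CS: assumes "A \<in> carrier_mat r c" "B \<in> carrier_mat c r"
  shows "cmod (mtrace (A * B)) \<le> fn A * fn B"
proof -
  have "cmod (mtrace (A * B)) = cmod (\<Sum>(i,k)\<in>{..<r} \<times> {..<c}. A $$ (i,k) * B $$ (k,i))"
    using assms by (simp add: mtrace_mult sum.cartesian_product)
  also have "\<dots> \<le> (\<Sum>(i,k)\<in>{..<r} \<times> {..<c}. cmod (A $$ (i,k)) * cmod (B $$ (k,i)))"
    by (rule order_trans[OF norm_sum]) (simp add: case_prod_beta norm_mult)
  also have "\<dots> = (\<Sum>x\<in>{..<r} \<times> {..<c}. \<bar>cmod (A $$ x)\<bar> * \<bar>cmod (B $$ (snd x, fst x))\<bar>)"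
    by (simp add: case_prod_beta)
  also have "\<dots> \<le> L2_set (\<lambda>x. cmod (A $$ x)) ({..<r} \<times> {..<c}) * L2_set (\<lambda>x. cmod (B $$ (snd x, fst x))) ({..<r} \<times> {..<c})"
    by (rule L2_set_mult_ineq)
  also have "L2_set (\<lambda>x. cmod (B $$ (snd x, fst x))) ({..<r} \<times> {..<c}) = fn B"
  proof -
    have "frob_sq B = (\<Sum>i<r. \<Sum>k<c. (cmod (B $$ (k,i)))\<^sup>2)"
      using frob_sum[OF assms(2)] by (simp add: sum.swap[of _ "{..<c}"])
    then show ?thesis unfolding fn_def L2_set_def sum.cartesian_product by (simp add: case_prod_beta)
  qed
  finally show ?thesis using assms by (simp add: fn_L2)
qed

lemma one2_upd1[simp]: "one2(p := 1\<^sub>m 2) = one2" by (auto simp: one2_def)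

lemma sigma_c[simp]: "sigma n s k \<in> carrier_mat (2^n) (2^n)"
  by (simp add: sigma_t)

lemma sigma_sq: "sigma n s k * sigma n s k = 1\<^sub>m (2^n)"
  by (simp add: sigma_t slot_mult pauli_sq flip: tensor_one2)

lemma sigma_adj: "mat_adjoint (sigma n s k) = sigma n s k"
  by (simp add: sigma_t slot_adj pauli_adj)

lemma ndot_c[simp]: "ndot_sigma n s v \<in> carrier_mat (2^n) (2^n)"
  by (simp add: ndot_sigma_def)

lemma ndot_sq: assumes "s \<in> {1..n}" "(\<Sum>k<3. (v k)\<^sup>2) = 1"
  shows "ndot_sigma n s v * ndot_sigma n s v = 1\<^sub>m (2^n)"
proof -
  have "(v 0)\<^sup>2 + (v 1)\<^sup>2 + (v 2)\<^sup>2 = 1" using assms(2) by (simp add: numeral_3_eq_3 numeral_2_eq_2)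
  then show ?thesis using assms(1) by (simp add: ndot_t slot_mult nsig_sq flip: tensor_one2)
qed

lemma ndot_adj: assumes "s \<in> {1..n}" shows "mat_adjoint (ndot_sigma n s v) = ndot_sigma n s v"
  using assms by (simp add: ndot_t slot_adj nsig_adj)

lemma ndot_sigma_comm: assumes "s \<in> {1..n}" "s' \<in> {1..n}" "s \<noteq> s'"
  shows "ndot_sigma n s v * sigma n s' k = sigma n s' k * ndot_sigma n s v"
proof -
  have "s - 1 \<noteq> s' - 1" using assms by auto
  then show ?thesis using assms(1) by (simp add: ndot_t sigma_t slot_comm)
qed

definition bF :: "(nat \<Rightarrow> nat \<Rightarrow> real) \<Rightarrow> nat \<Rightarrow> nat \<Rightarrow> complex mat" where
  "bF nperp l j = bloch_dm (\<lambda>k. (-1) ^ qbit l j * nperp (j + 1) k)"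

lemma basis_t: "basis_dm n nperp l = tensor n (bF nperp l)"
  unfolding basis_dm_def by (rule arg_cong[of _ _ "tensor n"]) (simp add: fun_eq_iff bF_def)

lemma neg1_sq: "((-1::real) ^ q)\<^sup>2 = 1"
  by (cases "even q") auto

lemma bF_c[simp]: "bF nperp l j \<in> carrier_mat 2 2" by (simp add: bF_def)

lemma rho_c[simp]: "basis_dm n nperp l \<in> carrier_mat (2^n) (2^n)"
  by (simp add: basis_t)

lemma rho_sq: assumes "\<forall>j\<in>{1..n}. (\<Sum>k<3. (nperp j k)\<^sup>2) = 1"
  shows "basis_dm n nperp l * basis_dm n nperp l = basis_dm n nperp l"
proof -
  have "bF nperp l j * bF nperp l j = bF nperp l j" if "j < n" for j
  proof -
    have "j + 1 \<in> {1..n}" using that by auto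
    then have "(\<Sum>k<3. (nperp (j+1) k)\<^sup>2) = 1" using assms by blast
    then have "(nperp (j+1) 0)\<^sup>2 + (nperp (j+1) 1)\<^sup>2 + (nperp (j+1) 2)\<^sup>2 = 1"
      by (simp add: numeral_3_eq_3 numeral_2_eq_2)
    then show ?thesis unfolding bF_def
      by (intro bloch_sq) (simp add: power_mult_distrib neg1_sq)
  qed
  then show ?thesis unfolding basis_t by (simp add: tensor_mult cong: tensor_cong)
qed

lemma rho_adj: "mat_adjoint (basis_dm n nperp l) = basis_dm n nperp l"
proof -
  have "mat_adjoint (tensor n (bF nperp l)) = tensor n (\<lambda>j. mat_adjoint (bF nperp l j))"
    by (rule adj_tensor) simp
  also have "\<dots> = tensor n (bF nperp l)"
    by (rule tensor_cong) (simp add: bF_def bloch_adj)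
  finally show ?thesis unfolding basis_t .
qed

lemma tensor_trace: assumes "\<And>j. j < n \<Longrightarrow> F j \<in> carrier_mat 2 2"
  shows "mtrace (tensor n F) = (\<Prod>j<n. F j $$ (0,0) + F j $$ (1,1))"
proof -
  have "mtrace (tensor n F) = (\<Sum>i<2^n. \<Prod>j<n. (\<lambda>j b. F j $$ (b,b)) j (qbit i j))"
    by (simp add: mtrace_def tensor_index)
  also have "\<dots> = (\<Prod>j<n. F j $$ (0,0) + F j $$ (1,1))"
    by (rule sum_prod_qbit)
  finally show ?thesis .
qed

lemma rho_tr: "mtrace (basis_dm n nperp l) = 1"
  unfolding basis_t by (simp add: tensor_trace bF_def bloch_i add_divide_distrib[symmetric])

lemma rho_sum: assumes "i < 2^n" "k < 2^n"
  shows "(\<Sum>l<2^n. basis_dm n nperp l $$ (i,k)) = (1\<^sub>m (2^n) :: complex mat) $$ (i,k)"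
proof -
  define G where "G j b = bloch_dm (\<lambda>q. (-1) ^ b * nperp (j + 1) q) $$ (qbit i j, qbit k j)" for j b
  have "(\<Sum>l<2^n. basis_dm n nperp l $$ (i,k)) = (\<Sum>l<2^n. \<Prod>j<n. G j (qbit l j))"
    using assms by (simp add: basis_t tensor_index bF_def G_def)
  also have "\<dots> = (\<Prod>j<n. G j 0 + G j 1)" by (rule sum_prod_qbit)
  also have "\<dots> = (\<Prod>j<n. (1\<^sub>m 2 :: complex mat) $$ (qbit i j, qbit k j))"
  proof (rule prod.cong)
    fix j
    have "qbit i j < 2" "qbit k j < 2" by (simp_all add: qbit_less)
    then show "G j 0 + G j 1 = (1\<^sub>m 2 :: complex mat) $$ (qbit i j, qbit k j)"
      unfolding G_def less2 by (auto simp: bloch_i add_divide_distrib[symmetric])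
  qed simp
  also have "\<dots> = tensor n (\<lambda>j. 1\<^sub>m 2) $$ (i,k)" using assms by (simp add: tensor_index)
  finally show ?thesis by (simp add: tensor_one)
qed

lemma rho_depol:
  assumes s: "s \<in> {1..n}" and v: "(\<Sum>k<3. (v k)\<^sup>2) = 1" and o: "(\<Sum>k<3. nperp s k * v k) = 0"
  shows "depol n s (basis_dm n nperp l)
    = (1/2::complex) \<cdot>\<^sub>m (basis_dm n nperp l + ndot_sigma n s v * basis_dm n nperp l * ndot_sigma n s v)"
proof -
  define p where "p = s - 1"
  define F where "F = bF nperp l"
  have p: "p < n" using s by (auto simp: p_def)
  have Fc: "\<And>j. F j \<in> carrier_mat 2 2" by (simp add: F_def)
  define m where "m = (\<lambda>k. (-1) ^ qbit l p * nperp s k)"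
  have Fp: "F p = bloch_dm m" using s by (simp add: F_def bF_def m_def p_def)
  have rho: "basis_dm n nperp l = tensor n (F(p := F p))" by (simp add: basis_t F_def)
  have sig: "sigma n s k * basis_dm n nperp l * sigma n s k = tensor n (F(p := pauli k * F p * pauli k))" for k
    unfolding sigma_t p_def[symmetric] basis_t F_def[symmetric] using p Fc by (simp add: tensor_conj)
  have nd: "ndot_sigma n s v * basis_dm n nperp l * ndot_sigma n s v = tensor n (F(p := nsig v * F p * nsig v))"
    unfolding ndot_t[OF s] p_def[symmetric] basis_t F_def[symmetric] using p Fc by (simp add: tensor_conj)
  have "depol n s (basis_dm n nperp l) = (1/4::complex) \<cdot>\<^sub>m (((tensor n (F(p := F p)) + tensor n (F(p := pauli 0 * F p * pauli 0)))
        + tensor n (F(p := pauli 1 * F p * pauli 1))) + tensor n (F(p := pauli 2 * F p * pauli 2)))"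
    unfolding depol_def sig by (simp only: rho[symmetric])
  also have "\<dots> = tensor n (F(p := (1/4::complex) \<cdot>\<^sub>m (((F p + pauli 0 * F p * pauli 0) + pauli 1 * F p * pauli 1) + pauli 2 * F p * pauli 2)))"
    using p Fc by (simp add: tensor_slot_add tensor_slot_smult)
  also have "\<dots> = tensor n (F(p := (1/2::complex) \<cdot>\<^sub>m 1\<^sub>m 2))"
    unfolding Fp depol2 ..
  also have "\<dots> = tensor n (F(p := (1/2::complex) \<cdot>\<^sub>m (F p + nsig v * F p * nsig v)))"
  proof -
    have "(v 0)\<^sup>2 + (v 1)\<^sup>2 + (v 2)\<^sup>2 = 1" using v by (simp add: numeral_3_eq_3 numeral_2_eq_2)
    moreover have "m 0 * v 0 + m 1 * v 1 + m 2 * v 2 = 0"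
    proof -
      have "nperp s 0 * v 0 + nperp s 1 * v 1 + nperp s 2 * v 2 = 0" using o by (simp add: numeral_3_eq_3 numeral_2_eq_2)
      then have "(-1) ^ qbit l p * (nperp s 0 * v 0 + nperp s 1 * v 1 + nperp s 2 * v 2) = 0" by simp
      then show ?thesis by (simp add: m_def algebra_simps)
    qed
    ultimately show ?thesis unfolding Fp by (simp add: twirl2)
  qed
  also have "\<dots> = (1/2::complex) \<cdot>\<^sub>m (tensor n (F(p := F p)) + tensor n (F(p := nsig v * F p * nsig v)))"
    using p Fc by (simp add: tensor_slot_add tensor_slot_smult)
  also have "\<dots> = (1/2::complex) \<cdot>\<^sub>m (basis_dm n nperp l + ndot_sigma n s v * basis_dm n nperp l * ndot_sigma n s v)"
    by (simp only: nd rho[symmetric])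
  finally show ?thesis .
qed

context
  fixes d :: nat
begin

lemma multd_c: "A \<in> carrier_mat d d \<Longrightarrow> B \<in> carrier_mat d d \<Longrightarrow> A * B \<in> carrier_mat d d"
  by (rule mult_carrier_mat)

lemma assoc_d: "A \<in> carrier_mat d d \<Longrightarrow> B \<in> carrier_mat d d \<Longrightarrow> C \<in> carrier_mat d d \<Longrightarrow> A * B * C = A * (B * C)"
  by (rule assoc_mult_mat)

lemma trm_add: assumes "A \<in> carrier_mat d d" "B \<in> carrier_mat d d" "C \<in> carrier_mat d d"
  shows "mtrace (A * (B + C)) = mtrace (A * B) + mtrace (A * C)"
  using assms by (simp add: mult_add_distrib_mat[of A d d B d C] tr_add[of _ d])

lemma trm_minus: assumes "A \<in> carrier_mat d d" "B \<in> carrier_mat d d" "C \<in> carrier_mat d d"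
  shows "mtrace (A * (B - C)) = mtrace (A * B) - mtrace (A * C)"
  using assms by (simp add: mult_minus_distrib_mat[of A d d B d C] tr_minus[of _ d])

lemma trm_smult: assumes "A \<in> carrier_mat d d" "B \<in> carrier_mat d d"
  shows "mtrace (A * (c \<cdot>\<^sub>m B)) = c * mtrace (A * B)"
  using assms by (simp add: mult_smult_distrib[of A d d B d] tr_smult[of _ d])

lemma trm_add_left: assumes "A \<in> carrier_mat d d" "B \<in> carrier_mat d d" "C \<in> carrier_mat d d"
  shows "mtrace ((A + B) * C) = mtrace (A * C) + mtrace (B * C)"
  using assms by (simp add: add_mult_distrib_mat[of A d d B C d] tr_add[of _ d])

lemma trm_smult_left: assumes "A \<in> carrier_mat d d" "B \<in> carrier_mat d d"
  shows "mtrace ((c \<cdot>\<^sub>m A) * B) = c * mtrace (A * B)"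
  using assms by (simp add: mult_smult_assoc_mat[of A d d B d] tr_smult[of _ d])

lemma tr_conj: assumes "A \<in> carrier_mat d d" "Y \<in> carrier_mat d d" "S \<in> carrier_mat d d"
  shows "mtrace (A * (S * Y * S)) = mtrace ((S * A * S) * Y)"
proof -
  have "A * (S * Y * S) = (A * S * Y) * S" using assms by (simp add: multd_c assoc_d)
  then have "mtrace (A * (S * Y * S)) = mtrace (S * (A * S * Y))"
    using assms by (simp only:) (rule tr_comm[of _ d d], auto)
  also have "S * (A * S * Y) = (S * A * S) * Y" using assms by (simp add: multd_c assoc_d)
  finally show ?thesis .
qed

end

lemma depol_c[simp]: "Y \<in> carrier_mat (2^n) (2^n) \<Longrightarrow> depol n s Y \<in> carrier_mat (2^n) (2^n)"
  unfolding depol_def by (simp add: multd_c[of _ "2^n"])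

lemma comm_c[simp]: "A \<in> carrier_mat d d \<Longrightarrow> B \<in> carrier_mat d d \<Longrightarrow> commutator A B \<in> carrier_mat d d"
  unfolding commutator_def by (simp add: multd_c minus_carrier_mat)

lemma depol_dual: assumes A: "A \<in> carrier_mat (2^n) (2^n)" and Y: "Y \<in> carrier_mat (2^n) (2^n)"
  shows "mtrace (A * depol n s Y) = mtrace (depol n s A * Y)"
proof -
  let ?d = "2^n"
  note c = A Y sigma_c multd_c[of _ ?d] add_carrier_mat
  have L: "mtrace (A * depol n s Y) = 1/4 * (((mtrace (A * Y) + mtrace (A * (sigma n s 0 * Y * sigma n s 0)))
     + mtrace (A * (sigma n s 1 * Y * sigma n s 1))) + mtrace (A * (sigma n s 2 * Y * sigma n s 2)))"
    unfolding depol_def using c by (simp add: trm_smult[of _ ?d] trm_add[of _ ?d] multd_c[of _ ?d])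
  have R: "mtrace (depol n s A * Y) = 1/4 * (((mtrace (A * Y) + mtrace ((sigma n s 0 * A * sigma n s 0) * Y))
     + mtrace ((sigma n s 1 * A * sigma n s 1) * Y)) + mtrace ((sigma n s 2 * A * sigma n s 2) * Y))"
    unfolding depol_def using c by (simp add: trm_smult_left[of _ ?d] trm_add_left[of _ ?d] multd_c[of _ ?d])
  show ?thesis unfolding L R using A Y by (simp add: tr_conj[of _ ?d])
qed

lemma key_identity:
  assumes s: "s \<in> {1..n}" and v: "(\<Sum>k<3. (v k)\<^sup>2) = 1" and o: "(\<Sum>k<3. nperp s k * v k) = 0"
    and Y: "Y \<in> carrier_mat (2^n) (2^n)"
  shows "mtrace (basis_dm n nperp l * Y) - mtrace (basis_dm n nperp l * depol n s Y)
     = 1/2 * mtrace (basis_dm n nperp l * (ndot_sigma n s v * commutator (ndot_sigma n s v) Y))"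
proof -
  let ?d = "2^n"
  let ?N = "ndot_sigma n s v"
  let ?r = "basis_dm n nperp l"
  have N: "?N \<in> carrier_mat ?d ?d" by simp
  have r: "?r \<in> carrier_mat ?d ?d" by simp
  have NN: "?N * ?N = 1\<^sub>m ?d" by (rule ndot_sq[OF s v])
  have 1: "mtrace (?r * depol n s Y) = 1/2 * (mtrace (?r * Y) + mtrace (?r * (?N * Y * ?N)))"
  proof -
    have "mtrace (?r * depol n s Y) = mtrace (depol n s ?r * Y)" using Y by (simp add: depol_dual)
    also have "\<dots> = mtrace (((1/2::complex) \<cdot>\<^sub>m (?r + ?N * ?r * ?N)) * Y)" using rho_depol[of s n v nperp l] s v o by simp
    also have "\<dots> = 1/2 * (mtrace (?r * Y) + mtrace ((?N * ?r * ?N) * Y))"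
      using Y N r by (simp add: trm_smult_left[of _ ?d] trm_add_left[of _ ?d] multd_c[of _ ?d])
    also have "mtrace ((?N * ?r * ?N) * Y) = mtrace (?r * (?N * Y * ?N))"
      using Y N r by (simp add: tr_conj[of _ ?d])
    finally show ?thesis .
  qed
  have 2: "mtrace (?r * (?N * commutator ?N Y)) = mtrace (?r * Y) - mtrace (?r * (?N * Y * ?N))"
  proof -
    have "?N * commutator ?N Y = ?N * (?N * Y) - ?N * (Y * ?N)"
      unfolding commutator_def using N Y by (simp add: mult_minus_distrib_mat[of _ ?d ?d _ ?d] multd_c[of _ ?d])
    also have "?N * (?N * Y) = Y"
    proof -
      have "?N * (?N * Y) = (?N * ?N) * Y" using N Y by (simp add: assoc_d[of _ ?d])
      then show ?thesis using NN Y by simp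
    qed
    also have "?N * (Y * ?N) = ?N * Y * ?N" using N Y by (simp add: assoc_d[of _ ?d])
    finally show ?thesis using N Y r by (simp add: trm_minus[of _ ?d] multd_c[of _ ?d] assoc_d[of _ ?d])
  qed
  show ?thesis unfolding 1 2 by (simp add: field_simps)
qed

lemma frob_adj: assumes "X \<in> carrier_mat r c"
  shows "frob_sq X = Re (mtrace (mat_adjoint X * X))"
  by (simp add: frob_sq_def)

lemma rho_bound:
  assumes u: "\<forall>j\<in>{1..n}. (\<Sum>k<3. (nperp j k)\<^sup>2) = 1" and X: "X \<in> carrier_mat (2^n) (2^n)"
  shows "cmod (mtrace (basis_dm n nperp l * X)) \<le> sqrt (frob_sq (basis_dm n nperp l * X))"
proof -
  let ?d = "2^n"
  let ?r = "basis_dm n nperp l"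
  have r: "?r \<in> carrier_mat ?d ?d" by simp
  have rr: "?r * ?r = ?r" by (rule rho_sq[OF u])
  have "?r * X = ?r * (?r * X)" using r X rr by (simp add: assoc_d[of _ ?d, symmetric])
  then have "cmod (mtrace (?r * X)) = cmod (mtrace (?r * (?r * X)))" by simp
  also have "\<dots> \<le> fn ?r * fn (?r * X)" using r X by (intro tr_CS[of _ ?d ?d]) (auto simp: multd_c)
  also have "fn ?r = 1"
  proof -
    have "frob_sq ?r = Re (mtrace (?r * ?r))" by (simp add: frob_sq_def rho_adj)
    also have "\<dots> = 1" by (simp add: rr rho_tr)
    finally show ?thesis by (simp add: fn_def)
  qed
  finally show ?thesis by (simp add: fn_def)
qed

lemma frob_rhoX:
  assumes u: "\<forall>j\<in>{1..n}. (\<Sum>k<3. (nperp j k)\<^sup>2) = 1" and X: "X \<in> carrier_mat (2^n) (2^n)"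
  shows "frob_sq (basis_dm n nperp l * X) = Re (mtrace (basis_dm n nperp l * (X * mat_adjoint X)))"
proof -
  let ?d = "2^n"
  let ?r = "basis_dm n nperp l"
  have r: "?r \<in> carrier_mat ?d ?d" by simp
  have Xa: "mat_adjoint X \<in> carrier_mat ?d ?d" using X by (rule adj_carrier)
  have rr: "?r * ?r = ?r" by (rule rho_sq[OF u])
  have "mat_adjoint (?r * X) * (?r * X) = mat_adjoint X * (?r * X)"
  proof -
    have "mat_adjoint (?r * X) * (?r * X) = mat_adjoint X * (?r * ?r * X)"
      using r X Xa by (simp add: adj_mult[of _ ?d ?d _ ?d] rho_adj assoc_d[of _ ?d] multd_c[of _ ?d])
    then show ?thesis by (simp add: rr)
  qed
  then have "frob_sq (?r * X) = Re (mtrace (mat_adjoint X * (?r * X)))" by (simp add: frob_sq_def)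
  also have "mtrace (mat_adjoint X * (?r * X)) = mtrace ((?r * X) * mat_adjoint X)"
    using r X Xa by (intro tr_comm[of _ ?d ?d]) (auto simp: multd_c)
  also have "(?r * X) * mat_adjoint X = ?r * (X * mat_adjoint X)" using r X Xa by (simp add: assoc_d[of _ ?d])
  finally show ?thesis .
qed

lemma sum_rho_tr: assumes W: "W \<in> carrier_mat (2^n) (2^n)"
  shows "(\<Sum>l<2^n. mtrace (basis_dm n nperp l * W)) = mtrace W"
proof -
  have "(\<Sum>l<2^n. mtrace (basis_dm n nperp l * W))
     = (\<Sum>l<2^n. \<Sum>i<2^n. \<Sum>k<2^n. basis_dm n nperp l $$ (i,k) * W $$ (k,i))"
    using W by (simp add: mtrace_mult[of _ "2^n" "2^n"])
  also have "\<dots> = (\<Sum>i<2^n. \<Sum>l<2^n. \<Sum>k<2^n. basis_dm n nperp l $$ (i,k) * W $$ (k,i))"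
    by (rule sum.swap)
  also have "\<dots> = (\<Sum>i<2^n. \<Sum>k<2^n. \<Sum>l<2^n. basis_dm n nperp l $$ (i,k) * W $$ (k,i))"
    by (rule sum.cong[OF refl], rule sum.swap)
  also have "\<dots> = (\<Sum>i<2^n. \<Sum>k<2^n. (\<Sum>l<2^n. basis_dm n nperp l $$ (i,k)) * W $$ (k,i))"
    by (simp add: sum_distrib_right)
  also have "\<dots> = (\<Sum>i<2^n. \<Sum>k<2^n. (1\<^sub>m (2^n) :: complex mat) $$ (i,k) * W $$ (k,i))"
    by (simp add: rho_sum)
  also have "\<dots> = (\<Sum>i<2^n. W $$ (i,i))"
  proof (intro sum.cong refl)
    fix i assume i: "i \<in> {..<(2::nat)^n}"
    have "(\<Sum>k<2^n. (1\<^sub>m (2^n) :: complex mat) $$ (i,k) * W $$ (k,i)) = (\<Sum>k<2^n. if k = i then W $$ (k,i) else 0)"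
      using i by (intro sum.cong) auto
    also have "\<dots> = W $$ (i,i)" using i by (simp add: sum.delta)
    finally show "(\<Sum>k<2^n. (1\<^sub>m (2^n) :: complex mat) $$ (i,k) * W $$ (k,i)) = W $$ (i,i)" .
  qed
  also have "\<dots> = mtrace W" using W by (simp add: mtrace_def)
  finally show ?thesis .
qed

lemma frob_NC: assumes s: "s \<in> {1..n}" and v: "(\<Sum>k<3. (v k)\<^sup>2) = 1"
    and C: "C \<in> carrier_mat (2^n) (2^n)"
  shows "Re (mtrace ((ndot_sigma n s v * C) * mat_adjoint (ndot_sigma n s v * C))) = frob_sq C"
proof -
  let ?d = "2^n"
  let ?N = "ndot_sigma n s v"
  have N: "?N \<in> carrier_mat ?d ?d" by simp
  have X: "?N * C \<in> carrier_mat ?d ?d" using C by (simp add: multd_c)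
  have Xa: "mat_adjoint (?N * C) \<in> carrier_mat ?d ?d" using X by (rule adj_carrier)
  have Ca: "mat_adjoint C \<in> carrier_mat ?d ?d" using C by (rule adj_carrier)
  have "mtrace ((?N * C) * mat_adjoint (?N * C)) = mtrace (mat_adjoint (?N * C) * (?N * C))"
    using X Xa by (rule tr_comm)
  also have "mat_adjoint (?N * C) * (?N * C) = mat_adjoint C * ((?N * ?N) * C)"
    using N C Ca by (simp add: adj_mult[of _ ?d ?d _ ?d] ndot_adj[OF s] assoc_d[of _ ?d] multd_c[of _ ?d])
  also have "\<dots> = mat_adjoint C * C" using C by (simp add: ndot_sq[OF s v])
  finally show ?thesis by (simp add: frob_sq_def)
qed

lemma sum_sqrt_le: assumes "\<And>l. l \<in> A \<Longrightarrow> 0 \<le> x l" "finite A"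
  shows "(\<Sum>l\<in>A. sqrt (x l)) \<le> sqrt (card A) * sqrt (\<Sum>l\<in>A. x l)"
proof -
  have "(\<Sum>l\<in>A. sqrt (x l)) = (\<Sum>l\<in>A. \<bar>1\<bar> * \<bar>sqrt (x l)\<bar>)" using assms by (intro sum.cong) auto
  also have "\<dots> \<le> L2_set (\<lambda>_. 1) A * L2_set (\<lambda>l. sqrt (x l)) A" by (rule L2_set_mult_ineq)
  also have "\<dots> = sqrt (card A) * sqrt (\<Sum>l\<in>A. x l)"
    using assms by (simp add: L2_set_def)
  finally show ?thesis .
qed

lemma step_bound:
  assumes s: "s \<in> {1..n}" and v: "(\<Sum>k<3. (v k)\<^sup>2) = 1" and o: "(\<Sum>k<3. nperp s k * v k) = 0"
    and u: "\<forall>j\<in>{1..n}. (\<Sum>k<3. (nperp j k)\<^sup>2) = 1"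
    and Y: "Y \<in> carrier_mat (2^n) (2^n)"
  shows "(\<Sum>l<2^n. cmod (mtrace (basis_dm n nperp l * Y) - mtrace (basis_dm n nperp l * depol n s Y)))
    \<le> 2^n * sqrt (frob_sq (commutator (ndot_sigma n s v) Y) / 2^(n+2))"
proof -
  let ?d = "2^n"
  let ?N = "ndot_sigma n s v"
  define C where "C = commutator ?N Y"
  define X where "X = ?N * C"
  have Cc: "C \<in> carrier_mat ?d ?d" using Y by (simp add: C_def)
  have Xc: "X \<in> carrier_mat ?d ?d" using Cc by (simp add: X_def multd_c)
  define x where "x l = frob_sq (basis_dm n nperp l * X)" for l
  have x0: "0 \<le> x l" for l using Xc by (simp add: x_def frob_nonneg[of _ ?d ?d] multd_c)
  have "(\<Sum>l<2^n. cmod (mtrace (basis_dm n nperp l * Y) - mtrace (basis_dm n nperp l * depol n s Y)))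
      = (\<Sum>l<2^n. 1/2 * cmod (mtrace (basis_dm n nperp l * X)))"
    by (simp add: key_identity[of s n v nperp Y, OF s v o Y] X_def C_def norm_mult)
  also have "\<dots> \<le> (\<Sum>l<2^n. 1/2 * sqrt (x l))"
    by (intro sum_mono mult_left_mono) (auto simp: x_def rho_bound[OF u Xc])
  also have "\<dots> = 1/2 * (\<Sum>l<2^n. sqrt (x l))" by (simp add: sum_distrib_left)
  also have "\<dots> \<le> 1/2 * (sqrt (2^n) * sqrt (\<Sum>l<2^n. x l))"
    using sum_sqrt_le[of "{..<2^n}" x] x0 by simp
  also have "(\<Sum>l<2^n. x l) = frob_sq C"
  proof -
    have "(\<Sum>l<2^n. x l) = (\<Sum>l<2^n. Re (mtrace (basis_dm n nperp l * (X * mat_adjoint X))))"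
      by (simp add: x_def frob_rhoX[OF u Xc])
    also have "\<dots> = Re (\<Sum>l<2^n. mtrace (basis_dm n nperp l * (X * mat_adjoint X)))" by simp
    also have "\<dots> = Re (mtrace (X * mat_adjoint X))"
      using Xc by (subst sum_rho_tr) (auto simp: multd_c adj_carrier)
    also have "\<dots> = frob_sq C" unfolding X_def by (rule frob_NC[OF s v Cc])
    finally show ?thesis .
  qed
  also have "1/2 * (sqrt (2^n) * sqrt (frob_sq C)) = 2^n * sqrt (frob_sq C / 2^(n+2))"
  proof -
    have "sqrt ((2::real)^(n+2)) = 2 * sqrt (2^n)"
      by (simp add: power_add real_sqrt_mult)
    moreover have "(2::real)^n = sqrt (2^n) * sqrt (2^n)" by simp
    ultimately show ?thesis by (simp add: real_sqrt_divide field_simps)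
  qed
  finally show ?thesis by (simp add: C_def)
qed

lemma comm_add: assumes "N \<in> carrier_mat d d" "A \<in> carrier_mat d d" "B \<in> carrier_mat d d"
  shows "commutator N (A + B) = commutator N A + commutator N B"
proof -
  have "commutator N (A + B) = (N * A + N * B) - (A * N + B * N)"
    unfolding commutator_def using assms
    by (simp add: mult_add_distrib_mat[of _ d d _ d] add_mult_distrib_mat[of _ d d _ _ d])
  also have "\<dots> = commutator N A + commutator N B"
    unfolding commutator_def using assms
    by (intro eq_matI) (auto simp: multd_c[of _ d])
  finally show ?thesis .
qed

lemma comm_smult: assumes "N \<in> carrier_mat d d" "A \<in> carrier_mat d d"
  shows "commutator N (c \<cdot>\<^sub>m A) = c \<cdot>\<^sub>m commutator N A"
  unfolding commutator_def using assms
  by (intro eq_matI) (auto simp: mult_smult_distrib[of _ d d _ d] mult_smult_assoc_mat[of _ d d _ d] algebra_simps)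

lemma comm_conj: assumes N: "N \<in> carrier_mat d d" and S: "S \<in> carrier_mat d d" and X: "X \<in> carrier_mat d d"
  and NS: "N * S = S * N"
  shows "commutator N (S * X * S) = S * commutator N X * S"
proof -
  have 1: "N * (S * X * S) = S * (N * X) * S"
  proof -
    have "N * (S * X * S) = (N * S) * X * S" using N S X by (simp add: assoc_d[of _ d] multd_c[of _ d])
    also have "\<dots> = S * (N * X) * S" using N S X NS by (simp add: assoc_d[of _ d] multd_c[of _ d])
    finally show ?thesis .
  qed
  have 2: "(S * X * S) * N = S * (X * N) * S"
  proof -
    have "(S * X * S) * N = S * X * (S * N)" using N S X by (simp add: assoc_d[of _ d] multd_c[of _ d])
    also have "\<dots> = S * (X * N) * S" using N S X NS by (simp add: assoc_d[of _ d] multd_c[of _ d])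
    finally show ?thesis .
  qed
  have 3: "S * (N * X - X * N) * S = S * (N * X) * S - S * (X * N) * S"
    using N S X by (simp add: mult_minus_distrib_mat[of _ d d _ d] minus_mult_distrib_mat[of _ d d _ _ d] multd_c[of _ d] minus_carrier_mat)
  show ?thesis unfolding commutator_def 1 2 3 ..
qed

lemma fn_conj_sigma: assumes "Z \<in> carrier_mat (2^n) (2^n)"
  shows "fn (sigma n s k * Z * sigma n s k) = fn Z"
proof -
  let ?d = "2^n"
  let ?S = "sigma n s k"
  have S: "?S \<in> carrier_mat ?d ?d" by simp
  have Za: "mat_adjoint Z \<in> carrier_mat ?d ?d" using assms by (rule adj_carrier)
  have "mat_adjoint (?S * Z * ?S) * (?S * Z * ?S) = ?S * (mat_adjoint Z * Z) * ?S"
  proof -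
    have "mat_adjoint (?S * Z * ?S) * (?S * Z * ?S) = ?S * (mat_adjoint Z * ((?S * ?S) * (Z * ?S)))"
      using S assms Za by (simp add: adj_mult[of _ ?d ?d _ ?d] sigma_adj assoc_d[of _ ?d] multd_c[of _ ?d])
    also have "\<dots> = ?S * (mat_adjoint Z * Z) * ?S"
      using S assms Za by (simp add: sigma_sq assoc_d[of _ ?d] multd_c[of _ ?d])
    finally show ?thesis .
  qed
  then have "mtrace (mat_adjoint (?S * Z * ?S) * (?S * Z * ?S)) = mtrace ((?S * (mat_adjoint Z * Z)) * ?S)" by simp
  also have "\<dots> = mtrace (?S * (?S * (mat_adjoint Z * Z)))"
    using S assms Za by (intro tr_comm[of _ ?d ?d]) (auto simp: multd_c)
  also have "\<dots> = mtrace (mat_adjoint Z * Z)"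
    using S assms Za by (simp add: assoc_d[of _ ?d, symmetric] multd_c[of _ ?d] sigma_sq)
  finally show ?thesis by (simp add: fn_def frob_sq_def)
qed

lemma fn_depol: assumes Z: "Z \<in> carrier_mat (2^n) (2^n)"
  shows "fn (depol n s Z) \<le> fn Z"
proof -
  let ?d = "2^n"
  let ?A = "\<lambda>k. sigma n s k * Z * sigma n s k"
  have Ac: "?A k \<in> carrier_mat ?d ?d" for k using Z by (simp add: multd_c)
  have "fn (depol n s Z) = cmod (1/4) * fn (((Z + ?A 0) + ?A 1) + ?A 2)"
    unfolding depol_def using Z Ac by (intro fn_smult[of _ ?d ?d]) auto
  also have "fn (((Z + ?A 0) + ?A 1) + ?A 2) \<le> ((fn Z + fn (?A 0)) + fn (?A 1)) + fn (?A 2)"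
  proof -
    have "fn (((Z + ?A 0) + ?A 1) + ?A 2) \<le> fn ((Z + ?A 0) + ?A 1) + fn (?A 2)"
      using Z Ac by (intro fn_triangle[of _ ?d ?d]) auto
    also have "fn ((Z + ?A 0) + ?A 1) \<le> fn (Z + ?A 0) + fn (?A 1)"
      using Z Ac by (intro fn_triangle[of _ ?d ?d]) auto
    also have "fn (Z + ?A 0) \<le> fn Z + fn (?A 0)"
      using Z Ac by (intro fn_triangle[of _ ?d ?d]) auto
    finally show ?thesis by simp
  qed
  also have "((fn Z + fn (?A 0)) + fn (?A 1)) + fn (?A 2) = 4 * fn Z"
    using Z by (simp add: fn_conj_sigma)
  finally show ?thesis by simp
qed

lemma comm_depol: assumes N: "N \<in> carrier_mat (2^n) (2^n)" and X: "X \<in> carrier_mat (2^n) (2^n)"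
  and NS: "\<And>k. N * sigma n s k = sigma n s k * N"
  shows "commutator N (depol n s X) = depol n s (commutator N X)"
proof -
  let ?d = "2^n"
  let ?A = "\<lambda>k. sigma n s k * X * sigma n s k"
  have Ac: "?A k \<in> carrier_mat ?d ?d" for k using X by (simp add: multd_c)
  have "commutator N (depol n s X) = (1/4) \<cdot>\<^sub>m commutator N (((X + ?A 0) + ?A 1) + ?A 2)"
    unfolding depol_def using N X Ac by (intro comm_smult[of _ ?d]) auto
  also have "commutator N (((X + ?A 0) + ?A 1) + ?A 2)
     = ((commutator N X + commutator N (?A 0)) + commutator N (?A 1)) + commutator N (?A 2)"
  proof -
    have "commutator N (((X + ?A 0) + ?A 1) + ?A 2) = commutator N ((X + ?A 0) + ?A 1) + commutator N (?A 2)"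
      using N X Ac by (intro comm_add[of _ ?d]) auto
    also have "commutator N ((X + ?A 0) + ?A 1) = commutator N (X + ?A 0) + commutator N (?A 1)"
      using N X Ac by (intro comm_add[of _ ?d]) auto
    also have "commutator N (X + ?A 0) = commutator N X + commutator N (?A 0)"
      using N X Ac by (intro comm_add[of _ ?d]) auto
    finally show ?thesis .
  qed
  also have "\<dots> = ((commutator N X + sigma n s 0 * commutator N X * sigma n s 0) + sigma n s 1 * commutator N X * sigma n s 1)
      + sigma n s 2 * commutator N X * sigma n s 2"
    using N X NS by (simp add: comm_conj[of _ ?d])
  finally show ?thesis unfolding depol_def .
qed

lemma frob_comm_depol:
  assumes s: "s \<in> {1..n}" and s': "s' \<in> {1..n}" and ss: "s \<noteq> s'" and Y: "Y \<in> carrier_mat (2^n) (2^n)"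
  shows "frob_sq (commutator (ndot_sigma n s v) (depol n s' Y)) \<le> frob_sq (commutator (ndot_sigma n s v) Y)"
proof -
  let ?d = "2^n"
  let ?N = "ndot_sigma n s v"
  have C: "commutator ?N Y \<in> carrier_mat ?d ?d" using Y by simp
  have "fn (commutator ?N (depol n s' Y)) = fn (depol n s' (commutator ?N Y))"
    using Y s s' ss by (simp add: comm_depol ndot_sigma_comm)
  also have "\<dots> \<le> fn (commutator ?N Y)" using C by (rule fn_depol)
  finally show ?thesis unfolding fn_def by simp
qed

lemma foldr_depol_c: "X \<in> carrier_mat (2^n) (2^n) \<Longrightarrow> foldr (depol n) L X \<in> carrier_mat (2^n) (2^n)"
  by (induction L) auto

lemma mono_fold:
  assumes s: "s \<in> {1..n}" and L: "set L \<subseteq> {1..n}" "s \<notin> set L" and X: "X \<in> carrier_mat (2^n) (2^n)"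
  shows "frob_sq (commutator (ndot_sigma n s v) (foldr (depol n) L X)) \<le> frob_sq (commutator (ndot_sigma n s v) X)"
  using L
proof (induction L)
  case Nil then show ?case by simp
next
  case (Cons a L)
  have "frob_sq (commutator (ndot_sigma n s v) (depol n a (foldr (depol n) L X)))
      \<le> frob_sq (commutator (ndot_sigma n s v) (foldr (depol n) L X))"
    using Cons.prems s X by (intro frob_comm_depol) (auto simp: foldr_depol_c)
  also have "\<dots> \<le> frob_sq (commutator (ndot_sigma n s v) X)" using Cons by auto
  finally show ?case by simp
qed

definition FF :: "nat \<Rightarrow> (nat \<Rightarrow> nat \<Rightarrow> real) \<Rightarrow> complex mat \<Rightarrow> complex mat \<Rightarrow> real" where
  "FF n nperp X Y = (\<Sum>l<2^n. cmod (mtrace (basis_dm n nperp l * X) - mtrace (basis_dm n nperp l * Y)))"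

lemma FF_tri: "FF n nperp X Z \<le> FF n nperp X Y + FF n nperp Y Z"
  unfolding FF_def sum.distrib[symmetric]
proof (intro sum_mono)
  fix l
  let ?x = "mtrace (basis_dm n nperp l * X)" and ?y = "mtrace (basis_dm n nperp l * Y)" and ?z = "mtrace (basis_dm n nperp l * Z)"
  have "?x - ?z = (?x - ?y) + (?y - ?z)" by simp
  then show "cmod (?x - ?z) \<le> cmod (?x - ?y) + cmod (?y - ?z)" by (metis norm_triangle_ineq)
qed

lemma tele:
  assumes Ssub: "S \<subseteq> {1..n}"
    and n_unit: "\<forall>s\<in>S. (\<Sum>k<3. (nv s k)\<^sup>2) = 1"
    and perp_unit: "\<forall>j\<in>{1..n}. (\<Sum>k<3. (nperp j k)\<^sup>2) = 1"
    and perp_orth: "\<forall>j\<in>S. (\<Sum>k<3. nperp j k * nv j k) = 0"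
    and X: "X \<in> carrier_mat (2^n) (2^n)"
  shows "distinct L \<Longrightarrow> set L \<subseteq> S \<Longrightarrow>
    FF n nperp X (foldr (depol n) L X) \<le> (\<Sum>s\<in>set L. 2^n * sqrt (frob_sq (commutator (ndot_sigma n s (nv s)) X) / 2^(n+2)))"
proof (induction L)
  case Nil then show ?case by (simp add: FF_def)
next
  case (Cons a L)
  let ?Y = "foldr (depol n) L X"
  have a: "a \<in> S" "a \<in> {1..n}" "a \<notin> set L" using Cons.prems Ssub by auto
  have Yc: "?Y \<in> carrier_mat (2^n) (2^n)" using X by (rule foldr_depol_c)
  have "FF n nperp X (depol n a ?Y) \<le> FF n nperp X ?Y + FF n nperp ?Y (depol n a ?Y)" by (rule FF_tri)
  also have "FF n nperp X ?Y \<le> (\<Sum>s\<in>set L. 2^n * sqrt (frob_sq (commutator (ndot_sigma n s (nv s)) X) / 2^(n+2)))"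
    using Cons by auto
  also have "FF n nperp ?Y (depol n a ?Y) \<le> 2^n * sqrt (frob_sq (commutator (ndot_sigma n a (nv a)) ?Y) / 2^(n+2))"
    unfolding FF_def using a n_unit perp_orth perp_unit Yc by (intro step_bound) auto
  also have "\<dots> \<le> 2^n * sqrt (frob_sq (commutator (ndot_sigma n a (nv a)) X) / 2^(n+2))"
    using a Cons.prems Ssub X by (intro mult_left_mono real_sqrt_le_mono divide_right_mono mono_fold) auto
  finally show ?case using a by (simp add: add.commute)
qed

theorem theorem2:
  fixes n :: nat and U :: "complex mat" and \<alpha> :: "nat list" and b :: int
    and S :: "nat set" and nv :: "nat \<Rightarrow> nat \<Rightarrow> real" and M :: "nat \<Rightarrow> nat \<Rightarrow> nat \<Rightarrow> real"
    and nperp :: "nat \<Rightarrow> nat \<Rightarrow> real"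
  defines "B \<equiv> (\<i> powi b) \<cdot>\<^sub>m majorana_prod n \<alpha>"
  defines "Obs \<equiv> mat_adjoint U * B * U"
  assumes mg: "matchgate n U"
    and cfg: "majorana_config n \<alpha>"
    and herm: "mat_adjoint B = B"
    and S_sub: "S \<subseteq> {1..n}"
    and n_unit: "\<forall>s\<in>S. (\<Sum>k<3. (nv s k)\<^sup>2) = 1"
    and M_def: "\<forall>s\<in>S. \<forall>v :: nat \<Rightarrow> real.
        frob_sq (commutator (ndot_sigma n s v) Obs) / 2 ^ (n + 2)
          = (\<Sum>a<3. \<Sum>c<3. v a * M s a c * v c)"
    and perp_unit: "\<forall>j\<in>{1..n}. (\<Sum>k<3. (nperp j k)\<^sup>2) = 1"
    and perp_orth: "\<forall>j\<in>S. (\<Sum>k<3. nperp j k * nv j k) = 0"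
  shows "(\<Sum>l<2 ^ n. cmod (expval (basis_dm n nperp l) Obs
             - expval (basis_dm n nperp l) (depol_set n S Obs))) / 2 ^ n
         \<le> (\<Sum>s\<in>S. sqrt (\<Sum>a<3. \<Sum>c<3. nv s a * M s a c * nv s c))"

proof -
  have Uc: "U \<in> carrier_mat (2^n) (2^n)" using mg by (simp add: matchgate_def unitary_mat_def)
  have Oc: "Obs \<in> carrier_mat (2^n) (2^n)" using Uc unfolding Obs_def by (intro carrier_matI) (auto dest: carrier_matD)
  have fin: "finite S" using S_sub finite_subset by blast
  have "(\<Sum>l<2 ^ n. cmod (expval (basis_dm n nperp l) Obs - expval (basis_dm n nperp l) (depol_set n S Obs)))
      = FF n nperp Obs (foldr (depol n) (sorted_list_of_set S) Obs)"
    by (simp add: FF_def expval_def depol_set_def)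
  also have "\<dots> \<le> (\<Sum>s\<in>set (sorted_list_of_set S). 2^n * sqrt (frob_sq (commutator (ndot_sigma n s (nv s)) Obs) / 2^(n+2)))"
    using fin by (intro tele[OF S_sub n_unit perp_unit perp_orth Oc]) auto
  also have "\<dots> = 2^n * (\<Sum>s\<in>S. sqrt (\<Sum>a<3. \<Sum>c<3. nv s a * M s a c * nv s c))"
    using fin M_def by (simp add: sum_distrib_left)
  finally show ?thesis by (simp add: field_simps)
qed

end
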